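(* Let $\mathcal{A}\in\mathbb{R}^{d_1\times\cdots\times d_k}$ be an order-$k$ real tensor that is $\mathbf{0}_{[k]}$-OD. Then for every partition $\pi\in\mathcal{P}_{[k]}$ with $\pi\ne\mathbf{1}_{[k]}$, \[ \|\mathrm{Unfold}_\pi(\mathcal{A})\|_\sigma=\|\mathcal{A}\|_\sigma . \]
   Context: $\mathcal{P}_{[k]}$ is the set of partitions of $[k]$; $\mathbf{0}_{[k]}=\{\{1\},\dots,\{k\}\}$, $\mathbf{1}_{[k]}=\{[k]\}$. $\mathcal{A}$ is $\mathbf{0}_{[k]}$-OD if $\mathcal{A}=\sum_{n=1}^r\lambda_n\mathbf{a}^{(n)}_1\otimes\cdots\otimes\mathbf{a}^{(n)}_k$ with $\lambda_1\ge\cdots\ge\lambda_r\ge0$, $\mathbf{a}^{(n)}_i\in\mathbb{R}^{d_i}$, and $\langle\mathbf{a}^{(n)}_i,\mathbf{a}^{(m)}_i\rangle=\delta_{nm}$ for all $i\in[k]$, $n,m\in[r]$. For a real tensor $\mathcal{T}\in\mathbb{R}^{e_1\times\cdots\times e_m}$, $\|\mathcal{T}\|_\sigma=\sup\{\sum t_{i_1\dots i_m}x^{(1)}_{i_1}\cdots x^{(m)}_{i_m}:\ \|\mathbf{x}_n\|_2=1\}$. Unfolding: for $\pi=\{B_1,\dots,B_\ell\}$, $\mathrm{Unfold}_\pi(\mathcal{A})$ is the order-$\ell$ tensor of dimensions $(\prod_{j\in B_1}d_j,\dots,\prod_{j\in B_\ell}d_j)$ whose entry at $(m_1,\dots,m_\ell)$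 is $a_{i_1\dots i_k}$, where $m_j$ corresponds to $(i_r)_{r\in B_j}$ under a fixed bijection $\prod_{r\in B_j}[d_r]\to[\prod_{r\in B_j}d_r]$. *)

theory Defs
  imports Main "HOL-Library.Extended_Real"
begin

text \<open>Order-k real tensors of dimensions ds = [d_1,...,d_k] (0-based positions) are
functions on index lists; only entries at valid indices matter.\<close>

definition index_set :: "nat list \<Rightarrow> nat list set" where
  "index_set ds = {is. length is = length ds \<and> (\<forall>j<length ds. is ! j < ds ! j)}"

definition multilin :: "nat list \<Rightarrow> (nat list \<Rightarrow> real) \<Rightarrow> (nat \<Rightarrow> nat \<Rightarrow> real) \<Rightarrow> real" where
  "multilin ds T xs = (\<Sum>is\<in>index_set ds. T is * (\<Prod>j<length ds. xs j (is ! j)))"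

definition spectral_norm :: "nat list \<Rightarrow> (nat list \<Rightarrow> real) \<Rightarrow> real" where
  "spectral_norm ds T = Sup {multilin ds T xs | xs.
      \<forall>j<length ds. (\<Sum>i<ds ! j. (xs j i)\<^sup>2) = 1}"

definition is_partition :: "nat \<Rightarrow> nat set list \<Rightarrow> bool" where
  "is_partition k Bs \<longleftrightarrow> (\<forall>j<length Bs. Bs ! j \<noteq> {}) \<and>
     (\<forall>j<length Bs. \<forall>l<length Bs. j \<noteq> l \<longrightarrow> Bs ! j \<inter> Bs ! l = {}) \<and>
     (\<Union>(set Bs)) = {..<k}"

definition block_of :: "nat set list \<Rightarrow> nat \<Rightarrow> nat" where
  "block_of Bs r = (THE j. j < length Bs \<and> r \<in> Bs ! j)"

definition unfold_dims :: "nat list \<Rightarrow> nat set list \<Rightarrow> nat list" where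
  "unfold_dims ds Bs = map (\<lambda>B. \<Prod>r\<in>B. ds ! r) Bs"

text \<open>Unfolding: the fixed bijection prod_{r in B}[d_r] -> [prod_{r in B} d_r] is the
mixed-radix encoding m = sum_{r in B} i_r * prod_{s in B, s<r} d_s; its inverse
recovers i_r = (m div prod_{s in B, s<r} d_s) mod d_r.\<close>
definition unfold :: "nat list \<Rightarrow> nat set list \<Rightarrow> (nat list \<Rightarrow> real) \<Rightarrow> (nat list \<Rightarrow> real)" where
  "unfold ds Bs A = (\<lambda>ms. A (map (\<lambda>r. (ms ! block_of Bs r div
        (\<Prod>s\<in>(Bs ! block_of Bs r) \<inter> {..<r}. ds ! s)) mod ds ! r) [0..<length ds]))"

definition zero_OD :: "nat list \<Rightarrow> (nat list \<Rightarrow> real) \<Rightarrow> bool" where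
  "zero_OD ds A \<longleftrightarrow> (\<exists>(r::nat) (lam::nat \<Rightarrow> real) (a::nat \<Rightarrow> nat \<Rightarrow> nat \<Rightarrow> real).
     (\<forall>n m. n \<le> m \<longrightarrow> m < r \<longrightarrow> lam m \<le> lam n) \<and> (\<forall>n<r. 0 \<le> lam n) \<and>
     (\<forall>i<length ds. \<forall>n<r. \<forall>m<r.
        (\<Sum>t<ds ! i. a n i t * a m i t) = (if n = m then 1 else 0)) \<and>
     (\<forall>is\<in>index_set ds. A is = (\<Sum>n<r. lam n * (\<Prod>i<length ds. a n i (is ! i)))))"

end

theory Submission
  imports Defs
begin

lemma index_set_Nil: "index_set [] = {[]}"
  by (auto simp: index_set_def)

lemma index_set_Cons: "index_set (d#es) = (\<lambda>(t,is). t#is) ` ({..<d} \<times> index_set es)"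
proof (rule set_eqI)
  fix xs show "xs \<in> index_set (d#es) \<longleftrightarrow> xs \<in> (\<lambda>(t,is). t#is) ` ({..<d} \<times> index_set es)"
  proof
    assume a: "xs \<in> index_set (d#es)"
    then obtain t ys where xs: "xs = t#ys" by (cases xs) (auto simp: index_set_def)
    have "t < d" using a xs by (auto simp: index_set_def)
    moreover have "ys \<in> index_set es" using a xs by (auto simp: index_set_def)
    ultimately show "xs \<in> (\<lambda>(t,is). t#is) ` ({..<d} \<times> index_set es)" using xs by auto
  next
    assume "xs \<in> (\<lambda>(t,is). t#is) ` ({..<d} \<times> index_set es)"
    then obtain t ys where "xs = t#ys" "t < d" "ys \<in> index_set es" by auto
    then show "xs \<in> index_set (d#es)" by (auto simp: index_set_def nth_Cons split: nat.splits)
  qed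
qed

lemma finite_index_set: "finite (index_set es)"
  by (induction es) (auto simp: index_set_Nil index_set_Cons)

lemma sum_index_set:
  fixes g :: "nat \<Rightarrow> nat \<Rightarrow> real"
  shows "(\<Sum>is\<in>index_set es. \<Prod>j<length es. g j (is!j)) = (\<Prod>j<length es. \<Sum>t<es!j. g j t)"
proof (induction es arbitrary: g)
  case Nil then show ?case by (simp add: index_set_Nil)
next
  case (Cons d es)
  have inj: "inj_on (\<lambda>(t,is). t#is) ({..<d} \<times> index_set es)" by (auto simp: inj_on_def)
  have "(\<Sum>is\<in>index_set (d#es). \<Prod>j<length (d#es). g j (is!j))
      = (\<Sum>(t,is)\<in>{..<d} \<times> index_set es. \<Prod>j<Suc (length es). g j ((t#is)!j))"
    unfolding index_set_Cons by (subst sum.reindex[OF inj]) (simp add: case_prod_unfold)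
  also have "\<dots> = (\<Sum>(t,is)\<in>{..<d} \<times> index_set es. g 0 t * (\<Prod>j<length es. g (Suc j) (is!j)))"
    by (intro sum.cong refl) (auto simp del: prod.lessThan_Suc simp add: prod.lessThan_Suc_shift)
  also have "\<dots> = (\<Sum>t<d. g 0 t * (\<Sum>is\<in>index_set es. \<Prod>j<length es. g (Suc j) (is!j)))"
    by (simp add: sum.cartesian_product[symmetric] sum_distrib_left)
  also have "\<dots> = (\<Sum>t<d. g 0 t) * (\<Prod>j<length es. \<Sum>t<es!j. g (Suc j) t)"
    using Cons.IH[of "\<lambda>j. g (Suc j)"] by (simp add: sum_distrib_right)
  also have "\<dots> = (\<Prod>j<length (d#es). \<Sum>t<(d#es)!j. g j t)"
    by (simp del: prod.lessThan_Suc add: prod.lessThan_Suc_shift)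
  finally show ?case .
qed

lemma bessel:
  fixes b :: "nat \<Rightarrow> nat \<Rightarrow> real" and x :: "nat \<Rightarrow> real"
  assumes orth: "\<forall>n<r. \<forall>m<r. (\<Sum>t<N. b n t * b m t) = (if n = m then 1 else 0)"
  shows "(\<Sum>n<r. (\<Sum>t<N. b n t * x t)\<^sup>2) \<le> (\<Sum>t<N. (x t)\<^sup>2)"
proof -
  define c where "c n = (\<Sum>t<N. b n t * x t)" for n
  have 0: "0 \<le> (\<Sum>t<N. (x t - (\<Sum>n<r. c n * b n t))\<^sup>2)" by (rule sum_nonneg) simp
  have "(\<Sum>t<N. x t * (\<Sum>n<r. c n * b n t)) = (\<Sum>t<N. \<Sum>n<r. c n * (b n t * x t))"
    by (simp add: sum_distrib_left mult_ac)
  also have "\<dots> = (\<Sum>n<r. c n * (\<Sum>t<N. b n t * x t))"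
    by (subst sum.swap) (simp add: sum_distrib_left)
  also have "\<dots> = (\<Sum>n<r. (c n)\<^sup>2)" by (simp add: c_def power2_eq_square)
  finally have e1: "(\<Sum>t<N. x t * (\<Sum>n<r. c n * b n t)) = (\<Sum>n<r. (c n)\<^sup>2)" .
  have "(\<Sum>t<N. (\<Sum>n<r. c n * b n t)\<^sup>2) = (\<Sum>t<N. \<Sum>n<r. \<Sum>m<r. c n * c m * (b n t * b m t))"
    by (simp add: power2_eq_square sum_distrib_left sum_distrib_right mult_ac)
  also have "\<dots> = (\<Sum>n<r. \<Sum>m<r. c n * c m * (\<Sum>t<N. b n t * b m t))"
    by (simp add: sum_distrib_left sum.swap[of _ "{..<N}"])
  also have "\<dots> = (\<Sum>n<r. \<Sum>m<r. c n * c m * (if n = m then 1 else 0))"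
    by (intro sum.cong refl) (simp add: orth)
  also have "\<dots> = (\<Sum>n<r. (c n)\<^sup>2)"
    by (simp add: power2_eq_square if_distrib cong: if_cong)
  finally have e2: "(\<Sum>t<N. (\<Sum>n<r. c n * b n t)\<^sup>2) = (\<Sum>n<r. (c n)\<^sup>2)" .
  have "(\<Sum>t<N. (x t - (\<Sum>n<r. c n * b n t))\<^sup>2) =
     (\<Sum>t<N. (x t)\<^sup>2) - 2 * (\<Sum>t<N. x t * (\<Sum>n<r. c n * b n t)) + (\<Sum>t<N. (\<Sum>n<r. c n * b n t)\<^sup>2)"
    by (simp add: power2_diff sum.distrib sum_subtractf sum_distrib_left mult_ac)
  with 0 e1 e2 show ?thesis unfolding c_def by simp
qed


lemma multilin_OD:
  assumes T: "\<forall>is\<in>index_set es. T is = (\<Sum>n<r. lam n * (\<Prod>j<length es. b n j (is!j)))"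
  shows "multilin es T xs = (\<Sum>n<r. lam n * (\<Prod>j<length es. \<Sum>t<es!j. b n j t * xs j t))"
proof -
  have "multilin es T xs = (\<Sum>is\<in>index_set es. (\<Sum>n<r. lam n * (\<Prod>j<length es. b n j (is!j))) * (\<Prod>j<length es. xs j (is!j)))"
    unfolding multilin_def using T by (intro sum.cong refl) simp
  also have "\<dots> = (\<Sum>n<r. lam n * (\<Sum>is\<in>index_set es. \<Prod>j<length es. b n j (is!j) * xs j (is!j)))"
    by (simp add: sum_distrib_right sum_distrib_left prod.distrib mult_ac sum.swap[of _ "index_set es"])
  also have "\<dots> = (\<Sum>n<r. lam n * (\<Prod>j<length es. \<Sum>t<es!j. b n j t * xs j t))"
    by (simp add: sum_index_set[where g = "\<lambda>j t. b _ j t * xs j t"])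
  finally show ?thesis .
qed

lemma prod_abs_le2:
  fixes c :: "nat \<Rightarrow> real"
  assumes "2 \<le> l" "\<forall>j<l. \<bar>c j\<bar> \<le> 1"
  shows "(\<Prod>j<l. \<bar>c j\<bar>) \<le> \<bar>c 0\<bar> * \<bar>c 1\<bar>"
  using assms
proof (induction l rule: dec_induct)
  case base then show ?case by (simp add: numeral_2_eq_2)
next
  case (step m)
  have "(\<Prod>j<Suc m. \<bar>c j\<bar>) = (\<Prod>j<m. \<bar>c j\<bar>) * \<bar>c m\<bar>" by simp
  also have "\<dots> \<le> (\<Prod>j<m. \<bar>c j\<bar>)"
    using step.prems by (intro mult_left_le) (auto intro: prod_nonneg)
  also have "\<dots> \<le> \<bar>c 0\<bar> * \<bar>c 1\<bar>" using step by auto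
  finally show ?case .
qed

lemma OD_norm:
  fixes es :: "nat list" and T :: "nat list \<Rightarrow> real" and b :: "nat \<Rightarrow> nat \<Rightarrow> nat \<Rightarrow> real"
  assumes l2: "2 \<le> length es" and pos: "\<forall>j<length es. 1 \<le> es!j"
    and mono: "\<forall>n m. n \<le> m \<longrightarrow> m < r \<longrightarrow> lam m \<le> lam n" and nn: "\<forall>n<r. 0 \<le> lam n"
    and orth: "\<forall>j<length es. \<forall>n<r. \<forall>m<r. (\<Sum>t<es!j. b n j t * b m j t) = (if n = m then 1 else 0)"
    and T: "\<forall>is\<in>index_set es. T is = (\<Sum>n<r. lam n * (\<Prod>j<length es. b n j (is!j)))"
  shows "spectral_norm es T = (if r = 0 then 0 else lam 0)"
proof -
  define L where "L = (if r = 0 then 0 else lam 0)"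
  define S where "S = {multilin es T xs | xs. \<forall>j<length es. (\<Sum>i<es ! j. (xs j i)\<^sup>2) = 1}"
  have up: "v \<le> L" if "v \<in> S" for v
  proof -
    obtain xs where v: "v = multilin es T xs" and u: "\<forall>j<length es. (\<Sum>i<es ! j. (xs j i)\<^sup>2) = 1"
      using \<open>v \<in> S\<close> unfolding S_def by blast
    define c where "c n j = (\<Sum>t<es!j. b n j t * xs j t)" for n j
    have bes: "(\<Sum>n<r. (c n j)\<^sup>2) \<le> 1" if "j < length es" for j
      using bessel[where r=r and N="es!j" and b="\<lambda>n t. b n j t" and x="xs j"] orth u that unfolding c_def by auto
    have c1: "\<bar>c n j\<bar> \<le> 1" if "j < length es" "n < r" for n j
    proof -
      have "(c n j)\<^sup>2 \<le> (\<Sum>n<r. (c n j)\<^sup>2)"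
        using that by (intro member_le_sum) auto
      then have "(c n j)\<^sup>2 \<le> 1" using bes[OF that(1)] by linarith
      then show ?thesis by (simp add: abs_square_le_1)
    qed
    have "v = (\<Sum>n<r. lam n * (\<Prod>j<length es. c n j))"
      unfolding v c_def by (rule multilin_OD[OF T])
    also have "\<dots> \<le> (\<Sum>n<r. lam 0 * (\<bar>c n 0\<bar> * \<bar>c n 1\<bar>))"
    proof (rule sum_mono)
      fix n assume n: "n \<in> {..<r}"
      have "lam n * (\<Prod>j<length es. c n j) \<le> lam n * \<bar>\<Prod>j<length es. c n j\<bar>"
        using nn n by (intro mult_left_mono) auto
      also have "\<dots> = lam n * (\<Prod>j<length es. \<bar>c n j\<bar>)" by (simp add: abs_prod)
      also have "\<dots> \<le> lam n * (\<bar>c n 0\<bar> * \<bar>c n 1\<bar>)"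
        using nn n c1 l2 by (intro mult_left_mono prod_abs_le2) auto
      also have "\<dots> \<le> lam 0 * (\<bar>c n 0\<bar> * \<bar>c n 1\<bar>)"
        using mono n by (intro mult_right_mono) auto
      finally show "lam n * (\<Prod>j<length es. c n j) \<le> lam 0 * (\<bar>c n 0\<bar> * \<bar>c n 1\<bar>)" .
    qed
    also have "\<dots> = lam 0 * (\<Sum>n<r. \<bar>c n 0\<bar> * \<bar>c n 1\<bar>)" by (simp add: sum_distrib_left)
    also have "\<dots> \<le> L"
    proof (cases "r = 0")
      case True then show ?thesis by (simp add: L_def)
    next
      case False
      have "(\<Sum>n<r. \<bar>c n 0\<bar> * \<bar>c n 1\<bar>) \<le> (\<Sum>n<r. ((c n 0)\<^sup>2 + (c n 1)\<^sup>2) / 2)"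
      proof (rule sum_mono)
        fix n
        have "0 \<le> (\<bar>c n 0\<bar> - \<bar>c n 1\<bar>)\<^sup>2" by simp
        then show "\<bar>c n 0\<bar> * \<bar>c n 1\<bar> \<le> ((c n 0)\<^sup>2 + (c n 1)\<^sup>2) / 2"
          by (simp add: power2_diff)
      qed
      also have "\<dots> = ((\<Sum>n<r. (c n 0)\<^sup>2) + (\<Sum>n<r. (c n 1)\<^sup>2)) / 2"
        by (simp add: sum.distrib sum_divide_distrib[symmetric])
      also have "\<dots> \<le> 1" using bes[of 0] bes[of 1] l2 by fastforce
      finally have "(\<Sum>n<r. \<bar>c n 0\<bar> * \<bar>c n 1\<bar>) \<le> 1" .
      moreover have "0 \<le> lam 0" using nn False by auto
      ultimately show ?thesis using False unfolding L_def
        by (simp add: mult_left_le)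
    qed
    finally show ?thesis .
  qed
  have ne: "S \<noteq> {}"
  proof -
    define xs where "xs j t = (if t = 0 then 1 else 0 :: real)" for j t :: nat
    have "\<forall>j<length es. (\<Sum>i<es ! j. (xs j i)\<^sup>2) = 1"
    proof (intro allI impI)
      fix j assume "j < length es"
      then have "0 < es!j" using pos by auto
      then show "(\<Sum>i<es ! j. (xs j i)\<^sup>2) = 1"
      proof -
        have "(\<Sum>i<es ! j. (xs j i)\<^sup>2) = (\<Sum>i<es ! j. if i = 0 then 1 else 0)" by (intro sum.cong) (auto simp: xs_def)
        then show ?thesis using \<open>0 < es!j\<close> by simp
      qed
    qed
    then show ?thesis unfolding S_def by blast
  qed
  have low: "L \<in> S" if "r > 0"
  proof -
    define xs where "xs j t = b 0 j t" for j t
    have u: "\<forall>j<length es. (\<Sum>i<es ! j. (xs j i)\<^sup>2) = 1"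
      using orth that by (auto simp: xs_def power2_eq_square)
    have "multilin es T xs = (\<Sum>n<r. lam n * (\<Prod>j<length es. \<Sum>t<es!j. b n j t * b 0 j t))"
      unfolding xs_def by (rule multilin_OD[OF T])
    also have "\<dots> = (\<Sum>n<r. lam n * (\<Prod>j<length es. (if n = 0 then 1 else 0)))"
      using orth that by (intro sum.cong refl arg_cong2[where f="(*)"] prod.cong) auto
    also have "\<dots> = (\<Sum>n<r. (if n = 0 then lam 0 else 0))"
      using l2 by (intro sum.cong refl) auto
    also have "\<dots> = L" using that by (simp add: L_def)
    finally show ?thesis unfolding S_def using u by blast
  qed
  have "Sup S = L"
  proof (cases "r = 0")
    case True
    have "S \<subseteq> {L}"
    proof
      fix v assume "v \<in> S"
      then obtain xs where "v = multilin es T xs" unfolding S_def by blast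
      then have "v = 0" using multilin_OD[OF T] True by simp
      then show "v \<in> {L}" using True by (simp add: L_def)
    qed
    then have "S = {L}" using ne by blast
    then show ?thesis by simp
  next
    case False
    show ?thesis
    proof (rule antisym)
      show "Sup S \<le> L" using ne up by (intro cSup_least) auto
      show "L \<le> Sup S" using low False up by (intro cSup_upper) (auto simp: bdd_above_def)
    qed
  qed
  then show ?thesis unfolding spectral_norm_def S_def L_def .
qed


lemma sum_split_mult:
  fixes g :: "nat \<Rightarrow> real"
  shows "(\<Sum>m<Q*k. g m) = (\<Sum>t<k. \<Sum>m'<Q. g (m' + Q*t))"
proof (induction k)
  case 0 then show ?case by simp
next
  case (Suc k)
  have "(\<Sum>m<Q*Suc k. g m) = (\<Sum>m<Q*k. g m) + (\<Sum>m\<in>{Q*k..<Q*k+Q}. g m)"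
    by (simp add: atLeast0LessThan[symmetric] sum.atLeastLessThan_concat add.commute)
  also have "(\<Sum>m\<in>{Q*k..<Q*k+Q}. g m) = (\<Sum>m'<Q. g (m' + Q*k))"
    using sum.shift_bounds_nat_ivl[of g 0 "Q*k" Q] by (simp add: atLeast0LessThan add.commute)
  finally show ?case using Suc by simp
qed

definition digit :: "nat set \<Rightarrow> (nat \<Rightarrow> nat) \<Rightarrow> nat \<Rightarrow> nat \<Rightarrow> nat" where
  "digit B d r m = (m div (\<Prod>s\<in>B \<inter> {..<r}. d s)) mod d r"

lemma mixed_radix:
  fixes f :: "nat \<Rightarrow> nat \<Rightarrow> real" and d :: "nat \<Rightarrow> nat"
  assumes "finite B" "\<forall>r\<in>B. 1 \<le> d r"
  shows "(\<Sum>m<(\<Prod>r\<in>B. d r). \<Prod>r\<in>B. f r (digit B d r m)) = (\<Prod>r\<in>B. \<Sum>t<d r. f r t)"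
  using assms
proof (induction B rule: finite_linorder_max_induct)
  case empty then show ?case by simp
next
  case (insert M B)
  have dpos: "0 < d x" if "x \<in> insert M B" for x using insert.prems that by (auto simp add: Suc_le_eq)
  have MB: "M \<notin> B" using insert by auto
  define Q where "Q = (\<Prod>r\<in>B. d r)"
  have Qpos: "0 < Q" unfolding Q_def using dpos by (simp add: prod_pos)
  have IH: "(\<Sum>m<(\<Prod>r\<in>B. d r). \<Prod>r\<in>B. f r (digit B d r m)) = (\<Prod>r\<in>B. \<Sum>t<d r. f r t)"
    using insert.IH insert.prems by simp
  have key: "(\<Prod>r\<in>insert M B. f r (digit (insert M B) d r (m' + Q*t))) = f M t * (\<Prod>r\<in>B. f r (digit B d r m'))"
    if "m' < Q" "t < d M" for m' t
  proof -
    have "insert M B \<inter> {..<M} = B" using insert by auto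
    moreover have "(m' + Q*t) div Q = t" using that Qpos by simp
    ultimately have dM: "digit (insert M B) d M (m' + Q*t) = t"
      unfolding digit_def using that by (simp add: Q_def)
    have dr: "digit (insert M B) d r (m' + Q*t) = digit B d r m'" if r: "r \<in> B" for r
    proof -
      have eq: "insert M B \<inter> {..<r} = B \<inter> {..<r}" using insert r by auto
      define p where "p = (\<Prod>s\<in>B \<inter> {..<r}. d s)"
      define q where "q = (\<Prod>s\<in>B \<inter> {r<..}. d s)"
      have Bsplit: "B = (B \<inter> {..<r}) \<union> (insert r (B \<inter> {r<..}))" using r by auto
      have "Q = p * (d r * q)" unfolding Q_def p_def q_def
        by (subst Bsplit, subst prod.union_disjoint) (use insert.hyps(1) in auto)
      have ppos: "0 < p" unfolding p_def using dpos by (simp add: prod_pos)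
      have "(m' + Q*t) div p = m' div p + d r * (q * t)"
        using ppos \<open>Q = p * (d r * q)\<close> by (simp add: mult.assoc)
      then show ?thesis unfolding digit_def eq p_def[symmetric] by simp
    qed
    show ?thesis using MB insert.hyps(1) dM dr by (simp add: prod.insert)
  qed
  have PQ: "(\<Prod>r\<in>insert M B. d r) = Q * d M" using MB insert.hyps(1) by (simp add: Q_def)
  have "(\<Sum>m<(\<Prod>r\<in>insert M B. d r). \<Prod>r\<in>insert M B. f r (digit (insert M B) d r m))
      = (\<Sum>t<d M. \<Sum>m'<Q. \<Prod>r\<in>insert M B. f r (digit (insert M B) d r (m' + Q*t)))"
    unfolding PQ by (rule sum_split_mult)
  also have "\<dots> = (\<Sum>t<d M. \<Sum>m'<Q. f M t * (\<Prod>r\<in>B. f r (digit B d r m')))"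
    using key by (intro sum.cong refl) auto
  also have "\<dots> = (\<Sum>t<d M. f M t) * (\<Prod>r\<in>B. \<Sum>t<d r. f r t)"
    using IH by (simp add: Q_def sum_distrib_left[symmetric] sum_distrib_right)
  also have "\<dots> = (\<Prod>r\<in>insert M B. \<Sum>t<d r. f r t)"
    using MB insert.hyps(1) by simp
  finally show ?case .
qed


lemma spectral_norm_Nil: "spectral_norm [] T = T []"
  by (simp add: spectral_norm_def multilin_def index_set_Nil)

theorem corollary5p6:
  fixes ds :: "nat list" and A :: "nat list \<Rightarrow> real" and Bs :: "nat set list"
  assumes "\<forall>i<length ds. 1 \<le> ds ! i"
    and "zero_OD ds A"
    and "is_partition (length ds) Bs"
    and "set Bs \<noteq> {{..<length ds}}"
  shows "spectral_norm (unfold_dims ds Bs) (unfold ds Bs A) = spectral_norm ds A"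
proof -
  define k where "k = length ds"
  define l where "l = length Bs"
  have dpos: "\<forall>i<k. 1 \<le> ds ! i" using assms(1) k_def by simp
  have ne: "\<forall>j<l. Bs ! j \<noteq> {}" and disj: "\<forall>j<l. \<forall>j'<l. j \<noteq> j' \<longrightarrow> Bs ! j \<inter> Bs ! j' = {}"
    and cov: "\<Union>(set Bs) = {..<k}"
    using assms(3) unfolding is_partition_def k_def l_def by auto
  have setBs: "set Bs = (!) Bs ` {..<l}" unfolding l_def by (auto simp: set_conv_nth)
  have sub: "Bs ! j \<subseteq> {..<k}" if "j < l" for j using cov setBs that by blast
  have finB: "finite (Bs ! j)" if "j < l" for j using sub[OF that] finite_subset by blast
  have bo: "block_of Bs r = j" if "j < l" "r \<in> Bs ! j" for r j
    unfolding block_of_def l_def[symmetric]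
  proof (rule the_equality)
    show "j < l \<and> r \<in> Bs ! j" using that by simp
    fix j' assume "j' < l \<and> r \<in> Bs ! j'"
    then show "j' = j" using disj that by blast
  qed
  have bo_ex: "\<exists>j<l. r \<in> Bs ! j" if "r < k" for r using cov setBs that by blast
  have bo1: "block_of Bs r < l \<and> r \<in> Bs ! block_of Bs r" if "r < k" for r
    using bo_ex[OF that] bo by metis
  obtain r :: nat and lam :: "nat \<Rightarrow> real" and a :: "nat \<Rightarrow> nat \<Rightarrow> nat \<Rightarrow> real" where mono: "\<forall>n m. n \<le> m \<longrightarrow> m < r \<longrightarrow> lam m \<le> lam n" and nn: "\<forall>n<r. 0 \<le> lam n"
    and orth0: "\<forall>i<length ds. \<forall>n<r. \<forall>m<r. (\<Sum>t<ds ! i. a n i t * a m i t) = (if n = m then 1 else 0)"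
    and Adec: "\<forall>is\<in>index_set ds. A is = (\<Sum>n<r. lam n * (\<Prod>i<length ds. a n i (is ! i)))"
    using assms(2) unfolding zero_OD_def by (elim exE conjE) (rule that; assumption)
  have orth: "\<forall>i<k. \<forall>n<r. \<forall>m<r. (\<Sum>t<ds ! i. a n i t * a m i t) = (if n = m then 1 else 0)"
    using orth0 k_def by simp
  show ?thesis
  proof (cases "k = 0")
    case True
    then have "Bs = []" using ne cov setBs l_def by (cases Bs) auto
    then show ?thesis using True k_def
      by (simp add: spectral_norm_Nil unfold_dims_def unfold_def)
  next
    case False
    have l1: "1 \<le> l" using False cov l_def by (cases Bs) auto
    have l2: "2 \<le> l"
    proof (rule ccontr)
      assume "\<not> 2 \<le> l"
      then have "l = 1" using l1 by simp
      then have "set Bs = {Bs ! 0}" using setBs by (simp add: lessThan_Suc)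
      then have "set Bs = {{..<k}}" using cov by simp
      then show False using assms(4) k_def by simp
    qed
    have k2: "2 \<le> k"
    proof (rule ccontr)
      assume "\<not> 2 \<le> k"
      then have "k = 1" using False by simp
      have "Bs ! 0 \<noteq> {}" "Bs ! 1 \<noteq> {}" using ne l2 by auto
      moreover have "Bs ! 0 \<subseteq> {0}" "Bs ! 1 \<subseteq> {0}" using sub[of 0] sub[of 1] l2 \<open>k = 1\<close> by auto
      ultimately have "Bs ! 0 \<inter> Bs ! 1 \<noteq> {}" by blast
      then show False using disj l2 by auto
    qed
    have RA: "spectral_norm ds A = (if r = 0 then 0 else lam 0)"
      using k2 dpos mono nn orth Adec unfolding k_def
      by (intro OD_norm[where b = a]) auto
    define es where "es = unfold_dims ds Bs"
    have esl: "length es = l" unfolding es_def unfold_dims_def l_def by simp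
    have esj: "es ! j = (\<Prod>r\<in>Bs ! j. ds ! r)" if "j < l" for j
      unfolding es_def unfold_dims_def using that l_def by simp
    have espos: "\<forall>j<length es. 1 \<le> es ! j"
    proof (intro allI impI)
      fix j assume "j < length es"
      then have j: "j < l" using esl by simp
      have "\<forall>r\<in>Bs ! j. 1 \<le> ds ! r" using sub[OF j] dpos by auto
      then show "1 \<le> es ! j" unfolding esj[OF j] by (simp add: Suc_le_eq prod_pos)
    qed
    define b where "b n j m = (\<Prod>r\<in>Bs ! j. a n r (digit (Bs ! j) ((!) ds) r m))" for n j m
    have orthb: "\<forall>j<length es. \<forall>n<r. \<forall>m<r. (\<Sum>t<es ! j. b n j t * b m j t) = (if n = m then 1 else 0)"
    proof (intro allI impI)
      fix j n m assume j: "j < length es" and n: "n < r" and m: "m < r"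
      then have jl: "j < l" using esl by simp
      have "(\<Sum>t<es ! j. b n j t * b m j t)
          = (\<Sum>t<(\<Prod>r\<in>Bs ! j. ds ! r). \<Prod>r\<in>Bs ! j. (\<lambda>r t. a n r t * a m r t) r (digit (Bs ! j) ((!) ds) r t))"
        unfolding esj[OF jl] b_def by (simp add: prod.distrib)
      also have "\<dots> = (\<Prod>r\<in>Bs ! j. \<Sum>t<ds ! r. a n r t * a m r t)"
        using finB[OF jl] sub[OF jl] dpos by (intro mixed_radix) auto
      also have "\<dots> = (\<Prod>r\<in>Bs ! j. (if n = m then 1 else 0))"
        using sub[OF jl] orth n m by (intro prod.cong refl) auto
      also have "\<dots> = (if n = m then 1 else 0)"
        using ne jl finB[OF jl] by (simp add: card_gt_0_iff)
      finally show "(\<Sum>t<es ! j. b n j t * b m j t) = (if n = m then 1 else 0)" .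
    qed
    have decb: "\<forall>ms\<in>index_set es. unfold ds Bs A ms = (\<Sum>n<r. lam n * (\<Prod>j<length es. b n j (ms ! j)))"
    proof
      fix ms assume ms: "ms \<in> index_set es"
      define g where "g i = digit (Bs ! block_of Bs i) ((!) ds) i (ms ! block_of Bs i)" for i
      have u: "unfold ds Bs A ms = A (map g [0..<k])"
        unfolding unfold_def g_def digit_def k_def by simp
      have isin: "map g [0..<k] \<in> index_set ds"
        unfolding index_set_def k_def[symmetric] mem_Collect_eq
      proof (intro conjI allI impI)
        show "length (map g [0..<k]) = k" by simp
        fix i assume "i < k"
        then show "map g [0..<k] ! i < ds ! i" using dpos by (simp add: g_def digit_def Suc_le_eq)
      qed
      have "unfold ds Bs A ms = (\<Sum>n<r. lam n * (\<Prod>i<k. a n i (g i)))"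
        using u Adec isin k_def by simp
      also have "\<dots> = (\<Sum>n<r. lam n * (\<Prod>j<length es. b n j (ms ! j)))"
      proof (intro sum.cong refl arg_cong2[where f = "(*)"])
        fix n
        have "(\<Prod>i<k. a n i (g i)) = (\<Prod>i\<in>\<Union>((!) Bs ` {..<l}). a n i (g i))"
          using cov setBs by simp
        also have "\<dots> = (\<Prod>j<l. \<Prod>i\<in>Bs ! j. a n i (g i))"
          using finB disj by (intro prod.UNION_disjoint) auto
        also have "\<dots> = (\<Prod>j<length es. b n j (ms ! j))"
          unfolding esl b_def
          by (intro prod.cong refl) (auto simp: g_def bo)
        finally show "(\<Prod>i<k. a n i (g i)) = (\<Prod>j<length es. b n j (ms ! j))" .
      qed
      finally show "unfold ds Bs A ms = (\<Sum>n<r. lam n * (\<Prod>j<length es. b n j (ms ! j)))" .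
    qed
    have RU: "spectral_norm es (unfold ds Bs A) = (if r = 0 then 0 else lam 0)"
      using l2 esl espos mono nn orthb decb
      by (intro OD_norm[where b = b]) auto
    show ?thesis using RA RU es_def by simp
  qed
qed

end
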